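(* Let $P,Q\in\mathbb P_d$ and $x\in\mathbb R$. Let $U_x:=\operatorname{Pol}(P^{x/2}Q^{1/2})$ and $V_x:=\operatorname{Pol}(P^{1/2}Q^{x/2})$. Then $$\operatorname{F}_{P^x}(P,Q)=\operatorname{Tr}\big[P^{1/2}U_xQ^{1/2}\big]=\operatorname{Tr}\big[P^{\frac{1-x}{2}}\sqrt{P^{x/2}QP^{x/2}}\big],\qquad \operatorname{F}_{Q^x}(P,Q)=\operatorname{Tr}\big[P^{1/2}V_xQ^{1/2}\big]=\operatorname{Tr}\big[\sqrt{Q^{x/2}PQ^{x/2}}\,Q^{\frac{1-x}{2}}\big].$$
   Context: $\mathbb P_d$ is the set of $d\times d$ complex positive definite matrices. For an invertible matrix $A$, $\operatorname{Pol}(A):=A(A^*A)^{-1/2}$ is its unitary polar factor. The generalized fidelity is $\operatorname{F}_R(P,Q):=\operatorname{Tr}\big[\sqrt{R^{1/2}PR^{1/2}}\,R^{-1}\sqrt{R^{1/2}QR^{1/2}}\big]$ for $R\in\mathbb P_d$. *)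

theory Defs
  imports "HOL-Analysis.Analysis"
begin

text \<open>Complex d x d matrices are modelled as complex^'n^'n, with d = CARD('n).\<close>

definition cadj :: "complex^'n^'n \<Rightarrow> complex^'n^'n" where
  "cadj A = (\<chi> i j. cnj (A $ j $ i))"

definition unitary_mat :: "complex^'n^'n \<Rightarrow> bool" where
  "unitary_mat U \<longleftrightarrow> cadj U ** U = mat 1 \<and> U ** cadj U = mat 1"

definition hermitian_mat :: "complex^'n^'n \<Rightarrow> bool" where
  "hermitian_mat A \<longleftrightarrow> cadj A = A"

definition cquad :: "complex^'n^'n \<Rightarrow> complex^'n \<Rightarrow> complex" where
  "cquad A v = (\<Sum>i\<in>UNIV. cnj (v $ i) * (A *v v) $ i)"

definition posdef_mat :: "complex^'n^'n \<Rightarrow> bool" where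
  "posdef_mat A \<longleftrightarrow> hermitian_mat A \<and> (\<forall>v. v \<noteq> 0 \<longrightarrow> Re (cquad A v) > 0)"

definition cdiag :: "('n \<Rightarrow> real) \<Rightarrow> complex^'n^'n" where
  "cdiag l = (\<chi> i j. if i = j then complex_of_real (l i) else 0)"

text \<open>Functional calculus for positive semidefinite matrices via the spectral
  decomposition A = U diag(l) U^*, l \<ge> 0 (well defined independently of the choice).\<close>
definition mfun :: "(real \<Rightarrow> real) \<Rightarrow> complex^'n^'n \<Rightarrow> complex^'n^'n" where
  "mfun f A = (SOME B. \<exists>U l. unitary_mat U \<and> (\<forall>i. l i \<ge> 0) \<and>
       A = U ** cdiag l ** cadj U \<and> B = U ** cdiag (\<lambda>i. f (l i)) ** cadj U)"

definition mpow :: "complex^'n^'n \<Rightarrow> real \<Rightarrow> complex^'n^'n" where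
  "mpow A x = mfun (\<lambda>t. t powr x) A"

definition msqrt :: "complex^'n^'n \<Rightarrow> complex^'n^'n" where
  "msqrt A = mfun sqrt A"

definition Pol :: "complex^'n^'n \<Rightarrow> complex^'n^'n" where
  "Pol A = A ** mpow (cadj A ** A) (-1/2)"

definition genF :: "complex^'n^'n \<Rightarrow> complex^'n^'n \<Rightarrow> complex^'n^'n \<Rightarrow> complex" where
  "genF R P Q = trace (msqrt (mpow R (1/2) ** P ** mpow R (1/2)) ** matrix_inv R **
                       msqrt (mpow R (1/2) ** Q ** mpow R (1/2)))"

end

theory Submission
  imports Defs
begin


lemma cadj_cadj[simp]: "cadj (cadj A) = A"
  by (simp add: cadj_def vec_eq_iff)

lemma cadj_mult: "cadj (A ** B) = cadj B ** cadj A"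
  by (simp add: cadj_def vec_eq_iff matrix_matrix_mult_def mult.commute)

lemma cadj_one[simp]: "cadj (mat 1 :: complex^'n^'n) = mat 1"
  by (simp add: cadj_def vec_eq_iff mat_def)

lemma cadj_cdiag[simp]: "cadj (cdiag l) = cdiag l"
  by (simp add: cadj_def vec_eq_iff cdiag_def)

lemma sum_if_mult1: "(\<Sum>k\<in>(UNIV::'n::finite set). a k * (if k = j then c k else 0)) = a j * (c j::complex)"
proof -
  have "(\<Sum>k\<in>(UNIV::'n set). a k * (if k = j then c k else 0)) = (\<Sum>k\<in>UNIV. if k = j then a k * c k else 0)"
    by (rule sum.cong) auto
  thus ?thesis by simp
qed

lemma sum_if_mult2: "(\<Sum>k\<in>(UNIV::'n::finite set). (if i = k then c else 0) * a k) = c * (a i::complex)"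
proof -
  have "(\<Sum>k\<in>(UNIV::'n set). (if i = k then c else 0) * a k) = (\<Sum>k\<in>UNIV. if i = k then c * a k else 0)"
    by (rule sum.cong) auto
  thus ?thesis by simp
qed

lemma mult_cdiag_nth: "(A ** cdiag l) $ i $ j = A $ i $ j * complex_of_real (l j)"
  by (simp add: cdiag_def matrix_matrix_mult_def sum_if_mult1)

lemma cdiag_mult_nth: "(cdiag l ** A) $ i $ j = complex_of_real (l i) * A $ i $ j"
  by (simp add: cdiag_def matrix_matrix_mult_def sum_if_mult2)

lemma cdiag_mult: "cdiag a ** cdiag b = cdiag (\<lambda>i. a i * b i)"
  by (simp add: vec_eq_iff cdiag_mult_nth) (simp add: cdiag_def)

lemma cdiag_mult_assoc: "cdiag a ** (cdiag b ** X) = cdiag (\<lambda>i. a i * b i) ** X"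
  by (simp add: matrix_mul_assoc cdiag_mult)

lemma cdiag_one: "cdiag (\<lambda>i. 1) = mat 1"
  by (simp add: cdiag_def mat_def vec_eq_iff)

lemma unitaryD1: "unitary_mat U \<Longrightarrow> cadj U ** U = mat 1"
  and unitaryD2: "unitary_mat U \<Longrightarrow> U ** cadj U = mat 1"
  by (auto simp: unitary_mat_def)

lemma unitary_cancel1: "unitary_mat U \<Longrightarrow> cadj U ** (U ** X) = X"
  by (simp add: matrix_mul_assoc unitaryD1)
lemma unitary_cancel2: "unitary_mat U \<Longrightarrow> U ** (cadj U ** X) = X"
  by (simp add: matrix_mul_assoc unitaryD2)

lemma unitary_mult: "unitary_mat U \<Longrightarrow> unitary_mat V \<Longrightarrow> unitary_mat (U ** V)"
  unfolding unitary_mat_def cadj_mult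
  by (simp add: matrix_mul_assoc unitary_cancel1 unitary_cancel2 unitary_mat_def)
    (metis matrix_mul_assoc matrix_mul_lid)

lemma unitary_cadj: "unitary_mat U \<Longrightarrow> unitary_mat (cadj U)"
  by (simp add: unitary_mat_def)

lemma unitary_iff1: "cadj U ** U = mat 1 \<Longrightarrow> unitary_mat U"
  by (simp add: unitary_mat_def matrix_left_right_inverse)

lemma matrix_inv_eq: "(A::complex^'n^'n) ** B = mat 1 \<Longrightarrow> matrix_inv A = B"
proof -
  assume AB: "A ** B = mat 1"
  hence BA: "B ** A = mat 1" by (simp add: matrix_left_right_inverse)
  have ex: "\<exists>A'. A ** A' = mat 1 \<and> A' ** A = mat 1" using AB BA by blast
  have *: "A ** matrix_inv A = mat 1 \<and> matrix_inv A ** A = mat 1"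
    unfolding matrix_inv_def by (rule someI_ex[OF ex])
  have "matrix_inv A = matrix_inv A ** (A ** B)" by (simp add: AB)
  also have "\<dots> = B" using * by (simp add: matrix_mul_assoc)
  finally show ?thesis .
qed

lemma fc_unique:
  assumes U: "unitary_mat U" and V: "unitary_mat V"
    and eq: "U ** cdiag l ** cadj U = V ** cdiag m ** cadj V"
  shows "U ** cdiag (\<lambda>i. f (l i)) ** cadj U = V ** cdiag (\<lambda>i. f (m i)) ** cadj V"
proof -
  define W where "W = cadj V ** U"
  have "cadj V ** (U ** cdiag l ** cadj U) ** U = cadj V ** (V ** cdiag m ** cadj V) ** U"
    using eq by simp
  hence WD: "W ** cdiag l = cdiag m ** W"
    by (simp add: W_def matrix_mul_assoc[symmetric] unitary_cancel1[OF U] unitary_cancel1[OF V]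
        unitaryD1[OF U])
  have WDf: "W ** cdiag (\<lambda>i. f (l i)) = cdiag (\<lambda>i. f (m i)) ** W"
  proof -
    { fix i j
      have "W $ i $ j * complex_of_real (l j) = complex_of_real (m i) * W $ i $ j"
        using arg_cong[OF WD, of "\<lambda>X. X $ i $ j"] by (simp add: mult_cdiag_nth cdiag_mult_nth)
      hence "W $ i $ j = 0 \<or> l j = m i" by auto
      hence "W $ i $ j * complex_of_real (f (l j)) = complex_of_real (f (m i)) * W $ i $ j"
        by auto }
    thus ?thesis by (simp add: vec_eq_iff mult_cdiag_nth cdiag_mult_nth)
  qed
  have UVW: "U = V ** W" by (simp add: W_def unitary_cancel2[OF V])
  have "U ** cdiag (\<lambda>i. f (l i)) ** cadj U = V ** (W ** cdiag (\<lambda>i. f (l i))) ** cadj U"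
    by (simp add: UVW matrix_mul_assoc)
  also have "\<dots> = V ** cdiag (\<lambda>i. f (m i)) ** (W ** cadj U)"
    by (simp add: WDf matrix_mul_assoc)
  also have "W ** cadj U = cadj V"
    by (simp add: W_def matrix_mul_assoc[symmetric] unitaryD2[OF U])
  finally show ?thesis .
qed

lemma mfun_eq:
  assumes U: "unitary_mat U" and l: "\<forall>i. l i \<ge> 0" and A: "A = U ** cdiag l ** cadj U"
  shows "mfun f A = U ** cdiag (\<lambda>i. f (l i)) ** cadj U"
proof -
  have ex: "\<exists>B. \<exists>U l. unitary_mat U \<and> (\<forall>i. l i \<ge> 0) \<and>
       A = U ** cdiag l ** cadj U \<and> B = U ** cdiag (\<lambda>i. f (l i)) ** cadj U"
    using U l A by blast
  from someI_ex[OF ex] obtain V m where V: "unitary_mat V" and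
    A': "A = V ** cdiag m ** cadj V" and B: "mfun f A = V ** cdiag (\<lambda>i. f (m i)) ** cadj V"
    unfolding mfun_def by blast
  show ?thesis unfolding B using fc_unique[OF V U, of m l f] A A' by simp
qed


definition cinner :: "complex^'n \<Rightarrow> complex^'n \<Rightarrow> complex" where
  "cinner u v = (\<Sum>i\<in>UNIV. cnj (u$i) * v$i)"

lemma cinner_add_right: "cinner u (v + w) = cinner u v + cinner u w"
  by (simp add: cinner_def distrib_left sum.distrib)
lemma cinner_add_left: "cinner (v + w) u = cinner v u + cinner w u"
  by (simp add: cinner_def distrib_right sum.distrib)
lemma cinner_diff_right: "cinner u (v - w) = cinner u v - cinner u w"
  by (simp add: cinner_def right_diff_distrib sum_subtractf)
lemma cinner_diff_left: "cinner (v - w) u = cinner v u - cinner w u"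
  by (simp add: cinner_def left_diff_distrib sum_subtractf)
lemma cinner_scale_right: "cinner u (c *s v) = c * cinner u v"
  by (simp add: cinner_def sum_distrib_left ac_simps)
lemma cinner_scale_left: "cinner (c *s v) u = cnj c * cinner v u"
  by (simp add: cinner_def sum_distrib_left ac_simps)
lemma cinner_zero_right[simp]: "cinner u 0 = 0"
  by (simp add: cinner_def)
lemma cinner_zero_left[simp]: "cinner 0 u = 0"
  by (simp add: cinner_def)
lemma cinner_cnj: "cnj (cinner u v) = cinner v u"
  by (simp add: cinner_def mult.commute)
lemma cinner_sum_right: "cinner u (\<Sum>i\<in>S. g i) = (\<Sum>i\<in>S. cinner u (g i))"
  by (simp add: cinner_def sum_component sum_distrib_left) (rule sum.swap)

lemma cinner_self: "cinner v v = complex_of_real ((norm v)^2)"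
proof -
  have "(norm v)^2 = (\<Sum>i\<in>UNIV. (cmod (v$i))^2)"
    by (simp add: norm_vec_def L2_set_def sum_nonneg)
  hence "complex_of_real ((norm v)^2) = (\<Sum>i\<in>UNIV. complex_of_real ((cmod (v$i))^2))"
    by simp
  also have "\<dots> = cinner v v"
    unfolding cinner_def by (rule sum.cong) (simp_all add: complex_norm_square[symmetric] mult.commute)
  finally show ?thesis by simp
qed

lemma cinner_self_eq0: "cinner v v = 0 \<longleftrightarrow> v = 0"
  by (simp add: cinner_self)

lemma mv_smult: "A *v (c *s x) = c *s (A *v (x :: complex^'n))"
  by (simp add: matrix_vector_mult_def vec_eq_iff sum_distrib_left ac_simps)

lemma herm_cinner:
  assumes "hermitian_mat A"
  shows "cinner u (A *v v) = cinner (A *v u) v"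
proof -
  have h: "\<And>i j. cnj (A $ j $ i) = A $ i $ j"
    using assms unfolding hermitian_mat_def cadj_def vec_eq_iff by auto
  have "cinner u (A *v v) = (\<Sum>i\<in>UNIV. \<Sum>j\<in>UNIV. cnj (u$i) * A$i$j * v$j)"
    by (simp add: cinner_def matrix_vector_mult_def sum_distrib_left ac_simps)
  also have "\<dots> = (\<Sum>j\<in>UNIV. \<Sum>i\<in>UNIV. cnj (u$i) * A$i$j * v$j)"
    by (rule sum.swap)
  also have "\<dots> = (\<Sum>j\<in>UNIV. \<Sum>i\<in>UNIV. cnj (A$j$i) * cnj (u$i) * v$j)"
    by (simp add: h ac_simps)
  also have "\<dots> = cinner (A *v u) v"
    by (simp add: cinner_def matrix_vector_mult_def sum_distrib_right)
  finally show ?thesis .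
qed

lemma cquad_cinner: "cquad A v = cinner v (A *v v)"
  by (simp add: cquad_def cinner_def)


lemma smult_real: "complex_of_real r *s x = r *\<^sub>R (x::complex^'n)"
  unfolding vec_eq_iff vector_scaleR_component vector_smult_component by (simp add: scaleR_conv_of_real)

lemma psd_zero:
  fixes b :: "complex^'n \<Rightarrow> complex^'n"
  assumes lin: "\<And>x y t. b (x + complex_of_real t *s y) = b x + complex_of_real t *s b y"
    and sa: "\<And>x y. cinner x (b y) = cinner (b x) y"
    and cl: "\<And>x y t. x \<in> W \<Longrightarrow> y \<in> W \<Longrightarrow> x + complex_of_real t *s y \<in> W"
    and psd: "\<And>x. x \<in> W \<Longrightarrow> Re (cinner x (b x)) \<ge> 0"
    and v: "v \<in> W" and bv: "b v \<in> W" and z: "Re (cinner v (b v)) = 0"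
  shows "b v = 0"
proof (rule ccontr)
  assume ne: "b v \<noteq> 0"
  define w where "w = b v"
  define N where "N = (norm w)^2"
  define c where "c = Re (cinner w (b w))"
  have N: "N > 0" using ne by (simp add: N_def w_def)
  have c: "c \<ge> 0" using psd bv by (simp add: c_def w_def)
  have key: "0 \<le> 2 * t * N + t * t * c" for t
  proof -
    define x where "x = v + complex_of_real t *s w"
    have "x \<in> W" using cl v bv by (simp add: x_def w_def)
    hence "0 \<le> Re (cinner x (b x))" by (rule psd)
    also have "cinner x (b x) = cinner v (b v) + complex_of_real t * cinner v (b w)
       + complex_of_real t * cinner w (b v) + complex_of_real t * complex_of_real t * cinner w (b w)"
      by (simp add: x_def lin cinner_add_left cinner_add_right cinner_scale_left cinner_scale_right
          algebra_simps)
    also have "cinner v (b w) = cinner w w" by (simp add: sa w_def)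
    also have "cinner w (b v) = cinner w w" by (simp add: w_def)
    also have "cinner w w = complex_of_real N" by (simp add: cinner_self N_def)
    finally show ?thesis using z by (simp add: c_def algebra_simps)
  qed
  define s where "s = N / (c + 1)"
  have s: "s > 0" using N c by (simp add: s_def)
  have "s * c < N" using N c by (simp add: s_def field_simps)
  hence "- 2 * N + s * c < 0" using N by linarith
  hence "s * (- 2 * N + s * c) < 0" using s by (simp add: mult_pos_neg)
  moreover have "0 \<le> 2 * (-s) * N + (-s) * (-s) * c" by (rule key)
  ultimately show False by (simp add: algebra_simps)
qed

lemma cquad_cont: "continuous_on UNIV (\<lambda>v. Re (cinner v (A *v v)))"
  unfolding cinner_def matrix_vector_mult_def
  by (intro continuous_intros)

lemma rayleigh:
  fixes A :: "complex^'n^'n"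
  assumes herm: "hermitian_mat A" and W: "closed W"
    and cl: "\<And>x y t. x \<in> W \<Longrightarrow> y \<in> W \<Longrightarrow> x + complex_of_real t *s y \<in> W"
    and sc: "\<And>x t. x \<in> W \<Longrightarrow> complex_of_real t *s x \<in> W"
    and inv: "\<And>x. x \<in> W \<Longrightarrow> A *v x \<in> W"
    and u: "u \<in> W" "u \<noteq> 0"
  shows "\<exists>v\<in>W. cinner v v = 1 \<and> (\<exists>\<mu>::real. A *v v = complex_of_real \<mu> *s v)"
proof -
  define q where "q v = Re (cinner v (A *v v))" for v :: "complex^'n"
  define K where "K = W \<inter> sphere 0 1"
  have K: "compact K" unfolding K_def using W by (intro closed_Int_compact) auto
  have uK: "complex_of_real (1 / norm u) *s u \<in> K"
    using u sc unfolding smult_real by (simp add: K_def)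
  have qc: "continuous_on K q"
    using cquad_cont[of A] unfolding q_def by (rule continuous_on_subset) auto
  obtain v0 where v0: "v0 \<in> K" and mx: "\<And>y. y \<in> K \<Longrightarrow> q y \<le> q v0"
    using continuous_attains_sup[OF K _ qc] uK by blast
  define \<mu> where "\<mu> = q v0"
  have qscale: "q (complex_of_real t *s y) = t * t * q y" for t y
    by (simp add: q_def mv_smult cinner_scale_left cinner_scale_right)
  have bound: "q y \<le> \<mu> * (norm y)^2" if y: "y \<in> W" for y
  proof (cases "y = 0")
    case True thus ?thesis by (simp add: q_def)
  next
    case False
    define r where "r = 1 / norm y"
    have "complex_of_real r *s y \<in> K" using y sc False unfolding smult_real by (simp add: K_def r_def)
    hence "q (complex_of_real r *s y) \<le> \<mu>" using mx by (simp add: \<mu>_def)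
    hence "r * r * q y \<le> \<mu>" by (simp add: qscale)
    hence "(norm y)^2 * (r * r * q y) \<le> (norm y)^2 * \<mu>" by (simp add: mult_left_mono)
    hence "((norm y)^2 * (r * r)) * q y \<le> (norm y)^2 * \<mu>" by (simp only: mult.assoc)
    moreover have e1: "(norm y)^2 * (r * r) = 1" using False by (simp add: r_def power2_eq_square)
    ultimately have "((norm y)^2 * (r * r)) * q y \<le> (norm y)^2 * \<mu>" by simp
    thus ?thesis unfolding e1 by (simp add: algebra_simps)
  qed
  define b where "b x = complex_of_real \<mu> *s x - A *v x" for x
  have lin: "b (x + complex_of_real t *s y) = b x + complex_of_real t *s b y" for x y t
    by (simp add: b_def matrix_vector_right_distrib mv_smult algebra_simps vector_sadd_rdistrib
        vector_ssub_ldistrib)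
  have sa: "cinner x (b y) = cinner (b x) y" for x y
    by (simp add: b_def cinner_diff_left cinner_diff_right cinner_scale_left cinner_scale_right
        herm_cinner[OF herm])
  have v0W: "v0 \<in> W" and nv0: "norm v0 = 1" using v0 by (auto simp: K_def)
  have bW: "b x \<in> W" if "x \<in> W" for x
  proof -
    have "complex_of_real \<mu> *s x + complex_of_real (-1) *s (A *v x) \<in> W"
      using that by (intro cl sc inv)
    thus ?thesis by (simp add: b_def)
  qed
  have psd: "Re (cinner x (b x)) \<ge> 0" if "x \<in> W" for x
  proof -
    have "Re (cinner x (b x)) = \<mu> * (norm x)^2 - q x"
      by (simp add: b_def q_def cinner_diff_right cinner_scale_right cinner_self)
    thus ?thesis using bound[OF that] by simp
  qed
  have z: "Re (cinner v0 (b v0)) = 0"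
    by (simp add: b_def q_def cinner_diff_right cinner_scale_right cinner_self nv0 \<mu>_def)
  have "b v0 = 0" by (rule psd_zero[OF lin sa cl psd v0W bW[OF v0W] z]) auto
  hence "A *v v0 = complex_of_real \<mu> *s v0" by (simp add: b_def)
  moreover have "cinner v0 v0 = 1" by (simp add: cinner_self nv0)
  ultimately show ?thesis using v0W by blast
qed


lemma cinner_cont: "continuous_on UNIV (\<lambda>v. cinner u v)"
  unfolding cinner_def by (intro continuous_intros)

lemma orth_eig_set:
  fixes A :: "complex^'n^'n" and S :: "'n set"
  assumes herm: "hermitian_mat A" and fin: "finite S"
  shows "\<exists>F l. (\<forall>i\<in>S. \<forall>j\<in>S. cinner (F i) (F j) = (if i = j then 1 else 0)) \<and>
               (\<forall>i\<in>S. A *v F i = complex_of_real (l i) *s F i)"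
  using fin
proof (induction S rule: finite_induct)
  case empty thus ?case by auto
next
  case (insert a S)
  from insert.IH obtain F l where
    on: "\<And>i j. i\<in>S \<Longrightarrow> j\<in>S \<Longrightarrow> cinner (F i) (F j) = (if i = j then 1 else 0)" and
    ev: "\<And>i. i\<in>S \<Longrightarrow> A *v F i = complex_of_real (l i) *s F i" by blast
  define W where "W = (\<Inter>i\<in>S. {v. cinner (F i) v = 0})"
  have clW: "closed W" unfolding W_def
    by (intro closed_INT ballI closed_Collect_eq cinner_cont continuous_intros)
  have cl: "x + complex_of_real t *s y \<in> W" if "x \<in> W" "y \<in> W" for x y t
    using that by (simp add: W_def cinner_add_right cinner_scale_right)
  have sc: "complex_of_real t *s x \<in> W" if "x \<in> W" for x t
    using that by (simp add: W_def cinner_scale_right)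
  have inv: "A *v x \<in> W" if "x \<in> W" for x
    using that by (simp add: W_def herm_cinner[OF herm] ev cinner_scale_left)
  have "\<exists>u\<in>W. u \<noteq> 0"
  proof (rule ccontr)
    assume "\<not> ?thesis"
    hence W0: "\<And>u. u \<in> W \<Longrightarrow> u = 0" by blast
    have "v \<in> vec.span (F ` S)" for v
    proof -
      define r where "r = v - (\<Sum>i\<in>S. cinner (F i) v *s F i)"
      have "cinner (F j) r = 0" if j: "j \<in> S" for j
      proof -
        have "(\<Sum>i\<in>S. cinner (F j) (cinner (F i) v *s F i)) =
              (\<Sum>i\<in>S. if i = j then cinner (F j) v else 0)"
          by (rule sum.cong) (auto simp: cinner_scale_right on j)
        thus ?thesis using j insert.hyps(1) by (simp add: r_def cinner_diff_right cinner_sum_right)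
      qed
      hence "r \<in> W" by (simp add: W_def)
      hence "r = 0" by (rule W0)
      hence "v = (\<Sum>i\<in>S. cinner (F i) v *s F i)" by (simp add: r_def)
      also have "\<dots> \<in> vec.span (F ` S)"
        by (intro vec.span_sum vec.span_scale vec.span_base) auto
      finally show ?thesis .
    qed
    hence "vec.dim (UNIV :: (complex^'n) set) \<le> card (F ` S)"
      using insert.hyps(1) by (intro vec.dim_le_card) auto
    also have "\<dots> \<le> card S" using insert.hyps(1) by (rule card_image_le)
    also have "card S < card (insert a S)" using insert.hyps by simp
    also have "\<dots> \<le> CARD('n)" by (rule card_mono) simp_all
    finally show False using vec_dim_card[where 'a=complex and 'n='n] by simp
  qed
  then obtain u where u: "u \<in> W" "u \<noteq> 0" by blast
  obtain v \<mu> where v: "v \<in> W" "cinner v v = 1" "A *v v = complex_of_real \<mu> *s v"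
    using rayleigh[OF herm clW cl sc inv u] by blast
  define F' where "F' = F(a := v)"
  define l' where "l' = l(a := \<mu>)"
  have vo: "cinner (F i) v = 0" if "i \<in> S" for i using v that by (simp add: W_def)
  have "\<forall>i\<in>insert a S. \<forall>j\<in>insert a S. cinner (F' i) (F' j) = (if i = j then 1 else 0)"
  proof (intro ballI)
    fix i j assume i: "i \<in> insert a S" and j: "j \<in> insert a S"
    show "cinner (F' i) (F' j) = (if i = j then 1 else 0)"
    proof (cases "i = a"; cases "j = a")
      assume "i = a" "j \<noteq> a"
      hence "j \<in> S" using j by auto
      thus ?thesis using \<open>i = a\<close> \<open>j \<noteq> a\<close> vo[of j] cinner_cnj[of "F j" v]
        by (simp add: F'_def)
    next
      assume "i \<noteq> a" "j = a"
      hence "i \<in> S" using i by auto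
      thus ?thesis using \<open>i \<noteq> a\<close> \<open>j = a\<close> vo[of i] by (simp add: F'_def)
    next
      assume "i \<noteq> a" "j \<noteq> a" thus ?thesis using i j on by (simp add: F'_def)
    qed (simp add: F'_def v)
  qed
  moreover have "\<forall>i\<in>insert a S. A *v F' i = complex_of_real (l' i) *s F' i"
    using ev v by (simp add: F'_def l'_def)
  ultimately show ?case by blast
qed

lemma spectral:
  fixes A :: "complex^'n^'n"
  assumes herm: "hermitian_mat A"
  shows "\<exists>U l. unitary_mat U \<and> A = U ** cdiag l ** cadj U \<and>
     (posdef_mat A \<longrightarrow> (\<forall>i. l i > 0))"
proof -
  obtain F :: "'n \<Rightarrow> complex^'n" and l where
    on: "\<And>i j. cinner (F i) (F j) = (if i = j then 1 else 0)" and
    ev: "\<And>i. A *v F i = complex_of_real (l i) *s F i"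
    using orth_eig_set[OF herm, of UNIV] by (auto simp: finite_UNIV)
  define U :: "complex^'n^'n" where "U = (\<chi> i j. F j $ i)"
  have "cadj U ** U = mat 1"
    using on by (simp add: vec_eq_iff U_def cadj_def matrix_matrix_mult_def mat_def cinner_def)
  hence U: "unitary_mat U" by (rule unitary_iff1)
  have AU: "A ** U = U ** cdiag l"
  proof -
    { fix i j
      have "(A ** U) $ i $ j = (A *v F j) $ i"
        by (simp add: U_def matrix_matrix_mult_def matrix_vector_mult_def)
      also have "\<dots> = (U ** cdiag l) $ i $ j"
        by (simp add: ev mult_cdiag_nth U_def mult.commute)
      finally have "(A ** U) $ i $ j = (U ** cdiag l) $ i $ j" . }
    thus ?thesis by (simp add: vec_eq_iff)
  qed
  have "A = A ** (U ** cadj U)" by (simp add: unitaryD2[OF U])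
  also have "\<dots> = U ** cdiag l ** cadj U" by (simp add: matrix_mul_assoc AU)
  finally have Aeq: "A = U ** cdiag l ** cadj U" .
  have "posdef_mat A \<longrightarrow> (\<forall>i. l i > 0)"
  proof (intro impI allI)
    fix i assume pd: "posdef_mat A"
    have "F i \<noteq> 0" using on[of i i] by auto
    hence "Re (cquad A (F i)) > 0" using pd by (simp add: posdef_mat_def)
    thus "l i > 0" using on[of i i] by (simp add: cquad_cinner ev cinner_scale_right)
  qed
  thus ?thesis using U Aeq by blast
qed


definition rep :: "complex^'n^'n \<Rightarrow> complex^'n^'n \<Rightarrow> ('n \<Rightarrow> real) \<Rightarrow> bool" where
  "rep A U l \<longleftrightarrow> unitary_mat U \<and> (\<forall>i. l i > 0) \<and> A = U ** cdiag l ** cadj U"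

lemma rep_exists: "posdef_mat A \<Longrightarrow> \<exists>U l. rep A U l"
  using spectral[of A] by (auto simp: rep_def posdef_mat_def)

lemma mfun_rep: "rep A U l \<Longrightarrow> mfun f A = U ** cdiag (\<lambda>i. f (l i)) ** cadj U"
  unfolding rep_def by (rule mfun_eq) (auto simp: less_imp_le)

lemma mpow_rep: "rep A U l \<Longrightarrow> mpow A a = U ** cdiag (\<lambda>i. l i powr a) ** cadj U"
  unfolding mpow_def by (rule mfun_rep)

lemma msqrt_rep: "rep A U l \<Longrightarrow> msqrt A = U ** cdiag (\<lambda>i. sqrt (l i)) ** cadj U"
  unfolding msqrt_def by (rule mfun_rep)

lemma rep_mpow: "rep A U l \<Longrightarrow> rep (mpow A a) U (\<lambda>i. l i powr a)"
proof -
  assume r: "rep A U l"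
  hence "\<And>i. l i > 0" by (simp add: rep_def)
  hence "\<And>i. l i powr a > 0" by (metis less_irrefl powr_gt_zero)
  thus ?thesis using mpow_rep[OF r, of a] r by (simp add: rep_def)
qed

lemma rep_mult: "unitary_mat U \<Longrightarrow>
   (U ** cdiag a ** cadj U) ** (U ** cdiag b ** cadj U) = U ** cdiag (\<lambda>i. a i * b i) ** cadj U"
  by (simp add: matrix_mul_assoc[symmetric] unitary_cancel1 cdiag_mult_assoc)

lemma herm_rep: "hermitian_mat (U ** cdiag a ** cadj U)"
  by (simp add: hermitian_mat_def cadj_mult matrix_mul_assoc)

context
  fixes A :: "complex^'n^'n"
  assumes pd: "posdef_mat A"
begin

lemma mpow_add: "mpow A a ** mpow A b = mpow A (a + b)"
proof -
  obtain U l where r: "rep A U l" using rep_exists[OF pd] by blast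
  have U: "unitary_mat U" and l: "\<And>i. l i > 0" using r by (auto simp: rep_def)
  show ?thesis unfolding mpow_rep[OF r] rep_mult[OF U]
    by (simp add: powr_add[symmetric] of_real_mult[symmetric] del: of_real_mult)
qed

lemma mpow_mpow: "mpow (mpow A a) b = mpow A (a * b)"
proof -
  obtain U l where r: "rep A U l" using rep_exists[OF pd] by blast
  have l: "\<And>i. l i > 0" using r by (auto simp: rep_def)
  have "mpow (mpow A a) b = U ** cdiag (\<lambda>i. (l i powr a) powr b) ** cadj U"
    by (rule mpow_rep[OF rep_mpow[OF r]])
  also have "\<dots> = mpow A (a * b)" unfolding mpow_rep[OF r] by (simp add: powr_powr)
  finally show ?thesis .
qed

lemma msqrt_mpow_half: "msqrt A = mpow A (1/2)"
proof -
  obtain U l where r: "rep A U l" using rep_exists[OF pd] by blast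
  have l: "\<And>i. l i > 0" using r by (auto simp: rep_def)
  show ?thesis unfolding mpow_rep[OF r] msqrt_rep[OF r]
    using l by (simp add: powr_half_sqrt less_imp_le)
qed

lemma msqrt_mpow: "msqrt (mpow A a) = mpow A (a / 2)"
proof -
  obtain U l where r: "rep A U l" using rep_exists[OF pd] by blast
  have l: "\<And>i. l i > 0" using r by (auto simp: rep_def)
  have "msqrt (mpow A a) = U ** cdiag (\<lambda>i. sqrt (l i powr a)) ** cadj U"
    by (rule msqrt_rep[OF rep_mpow[OF r]])
  also have "\<dots> = mpow A (a / 2)" unfolding mpow_rep[OF r]
    using l by (simp add: powr_half_sqrt[symmetric] less_imp_le powr_powr)
  finally show ?thesis .
qed

lemma mpow_1: "mpow A 1 = A"
proof -
  obtain U l where r: "rep A U l" using rep_exists[OF pd] by blast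
  have l: "\<And>i. l i > 0" using r by (auto simp: rep_def)
  have "(\<lambda>i. l i powr 1) = l" using l by (simp add: fun_eq_iff abs_of_pos)
  thus ?thesis unfolding mpow_rep[OF r] using r by (simp add: rep_def)
qed

lemma mpow_0: "mpow A 0 = mat 1"
proof -
  obtain U l where r: "rep A U l" using rep_exists[OF pd] by blast
  have l: "\<And>i. l i > 0" and U: "unitary_mat U" using r by (auto simp: rep_def)
  show ?thesis unfolding mpow_rep[OF r] using l
    by (simp add: cdiag_one unitaryD2[OF U] less_imp_neq[symmetric])
qed

lemma herm_mpow: "hermitian_mat (mpow A a)"
proof -
  obtain U l where r: "rep A U l" using rep_exists[OF pd] by blast
  show ?thesis unfolding mpow_rep[OF r] by (rule herm_rep)
qed

lemma cadj_mpow: "cadj (mpow A a) = mpow A a"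
  using herm_mpow by (simp add: hermitian_mat_def)

lemma mpow_inv: "mpow A a ** mpow A (-a) = mat 1"
  by (simp add: mpow_add mpow_0)

lemma matrix_inv_mpow: "matrix_inv (mpow A a) = mpow A (-a)"
  by (rule matrix_inv_eq) (rule mpow_inv)

lemma mpow_add_assoc: "mpow A a ** (mpow A b ** X) = mpow A (a + b) ** X"
  by (simp add: matrix_mul_assoc mpow_add)

lemma herm_A: "hermitian_mat A"
  using pd by (simp add: posdef_mat_def)

end

lemma posdef_congr:
  assumes Q: "posdef_mat Q" and H: "hermitian_mat H" and HG: "H ** G = mat 1"
  shows "posdef_mat (H ** Q ** H)"
proof -
  have GH: "G ** H = mat 1" using HG by (simp add: matrix_left_right_inverse)
  have hQ: "cadj Q = Q" and hH: "cadj H = H" using Q H by (auto simp: posdef_mat_def hermitian_mat_def)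
  have "hermitian_mat (H ** Q ** H)"
    by (simp add: hermitian_mat_def cadj_mult hQ hH matrix_mul_assoc)
  moreover have "Re (cquad (H ** Q ** H) v) > 0" if v: "v \<noteq> 0" for v
  proof -
    have "H *v v \<noteq> 0"
    proof
      assume "H *v v = 0"
      hence "G *v (H *v v) = 0" by simp
      thus False using v by (simp add: matrix_vector_mul_assoc GH)
    qed
    hence "Re (cquad Q (H *v v)) > 0" using Q by (simp add: posdef_mat_def)
    also have "cquad Q (H *v v) = cquad (H ** Q ** H) v"
      by (simp add: cquad_cinner matrix_vector_mul_assoc[symmetric] herm_cinner[OF H])
    finally show ?thesis .
  qed
  ultimately show ?thesis by (simp add: posdef_mat_def)
qed


lemmas massoc = matrix_mul_assoc[symmetric]

lemma mpow_exp_cong: "a = b \<Longrightarrow> mpow A a = mpow A b" by simp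

lemma genF_mpow1:
  assumes pA: "posdef_mat A"
  shows "genF (mpow A x) A B = trace (mpow A ((1-x)/2) ** msqrt (mpow A (x/2) ** B ** mpow A (x/2)))"
proof -
  have R2: "mpow (mpow A x) (1/2) = mpow A (x/2)" by (simp add: mpow_mpow[OF pA])
  have "mpow A (x/2) ** A ** mpow A (x/2) = mpow A (x/2) ** (mpow A 1 ** mpow A (x/2))"
    by (simp add: mpow_1[OF pA] massoc)
  also have "\<dots> = mpow A (1 + x)" by (simp add: mpow_add[OF pA] add.commute)
  finally have e1: "mpow A (x/2) ** A ** mpow A (x/2) = mpow A (1 + x)" .
  have e2: "msqrt (mpow A (1 + x)) ** matrix_inv (mpow A x) = mpow A ((1-x)/2)"
    by (simp add: msqrt_mpow[OF pA] matrix_inv_mpow[OF pA] mpow_add[OF pA] field_simps)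
  show ?thesis unfolding genF_def R2 e1 e2 ..
qed

lemma genF_mpow2:
  assumes pB: "posdef_mat B"
  shows "genF (mpow B x) A B = trace (msqrt (mpow B (x/2) ** A ** mpow B (x/2)) ** mpow B ((1-x)/2))"
proof -
  have R2: "mpow (mpow B x) (1/2) = mpow B (x/2)" by (simp add: mpow_mpow[OF pB])
  have "mpow B (x/2) ** B ** mpow B (x/2) = mpow B (x/2) ** (mpow B 1 ** mpow B (x/2))"
    by (simp add: mpow_1[OF pB] massoc)
  also have "\<dots> = mpow B (1 + x)" by (simp add: mpow_add[OF pB] add.commute)
  finally have e1: "mpow B (x/2) ** B ** mpow B (x/2) = mpow B (1 + x)" .
  have e2: "matrix_inv (mpow B x) ** msqrt (mpow B (1 + x)) = mpow B ((1-x)/2)"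
    by (simp add: msqrt_mpow[OF pB] matrix_inv_mpow[OF pB] mpow_add[OF pB] field_simps)
  show ?thesis unfolding genF_def R2 e1 by (simp only: massoc e2)
qed

lemma part4:
  assumes pP: "posdef_mat P" and pQ: "posdef_mat Q"
  shows "trace (mpow P (1/2) ** Pol (mpow P (1/2) ** mpow Q (x/2)) ** mpow Q (1/2))
       = trace (msqrt (mpow Q (x/2) ** P ** mpow Q (x/2)) ** mpow Q ((1-x)/2))"
proof -
  define K where "K = mpow Q (x/2)"
  define Ki where "Ki = mpow Q (-x/2)"
  define P2 where "P2 = mpow P (1/2)"
  define Q2 where "Q2 = mpow Q (1/2)"
  define M where "M = K ** P ** K"
  have KKi: "K ** Ki = mat 1" unfolding K_def Ki_def using mpow_inv[OF pQ, of "x/2"] by simp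
  have pM: "posdef_mat M" unfolding M_def
    by (rule posdef_congr[OF pP _ KKi]) (simp add: K_def herm_mpow[OF pQ])
  define Si where "Si = mpow M (-1/2)"
  define S where "S = msqrt M"
  have cB: "cadj (P2 ** K) ** (P2 ** K) = M"
    by (simp add: cadj_mult P2_def K_def cadj_mpow[OF pP] cadj_mpow[OF pQ] massoc
        mpow_add_assoc[OF pP] mpow_1[OF pP] M_def)
  have Pol: "Pol (P2 ** K) = P2 ** K ** Si" by (simp add: Pol_def cB Si_def)
  have MS: "M ** (Si ** Q2) = S ** Q2"
  proof -
    have "M ** (Si ** Q2) = mpow M 1 ** (mpow M (-1/2) ** Q2)" by (simp add: mpow_1[OF pM] Si_def)
    also have "\<dots> = mpow M (1/2) ** Q2" by (simp add: mpow_add_assoc[OF pM])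
    finally show ?thesis by (simp add: S_def msqrt_mpow_half[OF pM])
  qed
  have "P2 ** (P2 ** K ** Si) ** Q2 = P ** (K ** (Si ** Q2))"
    by (simp add: massoc P2_def mpow_add_assoc[OF pP] mpow_1[OF pP])
  also have "\<dots> = Ki ** (K ** (P ** (K ** (Si ** Q2))))"
    by (simp add: Ki_def K_def mpow_add_assoc[OF pQ] mpow_0[OF pQ])
  also have "K ** (P ** (K ** (Si ** Q2))) = M ** (Si ** Q2)" by (simp add: M_def massoc)
  also have "\<dots> = S ** Q2" by (rule MS)
  finally have e: "P2 ** (P2 ** K ** Si) ** Q2 = Ki ** (S ** Q2)" .
  have "trace (Ki ** (S ** Q2)) = trace (S ** (Q2 ** Ki))"
    by (simp add: trace_mul_sym[of Ki] massoc)
  also have "Q2 ** Ki = mpow Q ((1-x)/2)"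
    by (simp add: Q2_def Ki_def mpow_add[OF pQ] field_simps)
  finally show ?thesis
    unfolding Pol[unfolded P2_def K_def] e[unfolded P2_def K_def Q2_def] S_def M_def K_def Q2_def .
qed


lemma part2:
  assumes pP: "posdef_mat P" and pQ: "posdef_mat Q"
  shows "trace (mpow P (1/2) ** Pol (mpow P (x/2) ** mpow Q (1/2)) ** mpow Q (1/2))
       = trace (mpow P ((1-x)/2) ** msqrt (mpow P (x/2) ** Q ** mpow P (x/2)))"
proof -
  define H where "H = mpow P (x/2)"
  define Hi where "Hi = mpow P (-x/2)"
  define P2 where "P2 = mpow P (1/2)"
  define Q2 where "Q2 = mpow Q (1/2)"
  define A where "A = H ** Q2"
  define M where "M = H ** Q ** H"
  have HHi: "H ** Hi = mat 1" unfolding H_def Hi_def using mpow_inv[OF pP, of "x/2"] by simp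
  have pM: "posdef_mat M" unfolding M_def
    by (rule posdef_congr[OF pQ _ HHi]) (simp add: H_def herm_mpow[OF pP])
  define Si where "Si = mpow M (-1/2)"
  define S where "S = mpow M (1/2)"
  have hSi: "cadj Si = Si" by (simp add: Si_def cadj_mpow[OF pM])
  have AA: "A ** cadj A = M"
    by (simp add: A_def M_def cadj_mult H_def Q2_def cadj_mpow[OF pP] cadj_mpow[OF pQ] massoc
        mpow_add_assoc[OF pQ] mpow_1[OF pQ])
  define W where "W = Si ** A"
  have SiMSi: "Si ** (M ** Si) = mat 1"
  proof -
    have "Si ** (mpow M 1 ** Si) = mat 1"
      by (simp add: Si_def mpow_add_assoc[OF pM] mpow_add[OF pM] mpow_0[OF pM])
    thus ?thesis by (simp add: mpow_1[OF pM])
  qed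
  have WW: "W ** cadj W = mat 1"
    by (simp add: W_def cadj_mult hSi massoc) (metis AA SiMSi matrix_mul_assoc)
  hence uW: "unitary_mat W" by (simp add: unitary_mat_def matrix_left_right_inverse)
  have SSi: "S ** (Si ** X) = X" for X
    by (simp add: S_def Si_def mpow_add_assoc[OF pM] mpow_0[OF pM])
  have ASW: "A = S ** W" by (simp add: W_def SSi)
  have SS: "S ** (S ** X) = M ** X" for X
    by (simp add: S_def mpow_add_assoc[OF pM] mpow_1[OF pM])
  obtain V m where r: "rep M V m" using rep_exists[OF pM] by blast
  have uV: "unitary_mat V" and Mr: "M = V ** cdiag m ** cadj V" and m: "\<forall>i. m i > 0"
    using r by (auto simp: rep_def)
  have AAr: "cadj A ** A = (cadj W ** V) ** cdiag m ** cadj (cadj W ** V)"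
  proof -
    have "cadj A ** A = cadj W ** (S ** (S ** W))"
      by (simp add: ASW cadj_mult S_def cadj_mpow[OF pM] massoc)
    also have "\<dots> = cadj W ** (M ** W)" by (simp add: SS)
    also have "\<dots> = (cadj W ** V) ** cdiag m ** cadj (cadj W ** V)"
      by (simp add: Mr cadj_mult massoc)
    finally show ?thesis .
  qed
  have rAA: "rep (cadj A ** A) (cadj W ** V) m"
    using AAr m uV uW by (simp add: rep_def unitary_mult unitary_cadj)
  have "mpow (cadj A ** A) (-1/2) = (cadj W ** V) ** cdiag (\<lambda>i. m i powr (-1/2)) ** cadj (cadj W ** V)"
    by (rule mpow_rep[OF rAA])
  also have "\<dots> = cadj W ** Si ** W"
    by (simp add: Si_def mpow_rep[OF r] cadj_mult massoc)
  finally have mAA: "mpow (cadj A ** A) (-1/2) = cadj W ** Si ** W" .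
  have PolW: "Pol A = W"
  proof -
    have "Pol A = S ** (W ** (cadj W ** (Si ** W)))"
      unfolding Pol_def mAA by (simp add: ASW massoc)
    also have "\<dots> = W" by (simp add: unitary_cancel2[OF uW] SSi)
    finally show ?thesis .
  qed
  have HQ: "Si ** (H ** Q) = S ** Hi"
  proof -
    have "H ** Q = M ** Hi" by (simp add: M_def massoc HHi)
    also have "M = mpow M 1" by (simp add: mpow_1[OF pM])
    finally have "Si ** (H ** Q) = Si ** (mpow M 1 ** Hi)" by simp
    thus ?thesis by (simp add: Si_def S_def mpow_add_assoc[OF pM])
  qed
  have "P2 ** W ** Q2 = P2 ** (Si ** (H ** (Q2 ** Q2)))" by (simp add: W_def A_def massoc)
  also have "Q2 ** Q2 = Q" by (simp add: Q2_def mpow_add[OF pQ] mpow_1[OF pQ])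
  also note HQ
  finally have e: "P2 ** W ** Q2 = P2 ** (S ** Hi)" .
  have "trace (P2 ** (S ** Hi)) = trace (Hi ** P2 ** S)"
    by (metis matrix_mul_assoc trace_mul_sym)
  also have "Hi ** P2 = mpow P ((1-x)/2)"
    by (simp add: Hi_def P2_def mpow_add[OF pP] field_simps)
  finally have t: "trace (P2 ** (S ** Hi)) = trace (mpow P ((1-x)/2) ** S)" .
  have Sm: "S = msqrt M" by (simp add: S_def msqrt_mpow_half[OF pM])
  show ?thesis using t
    unfolding PolW[unfolded A_def H_def Q2_def] e[unfolded P2_def Q2_def]
    unfolding P2_def Sm M_def H_def .
qed

theorem mainTheorem10:
  fixes P Q :: "complex^'n^'n" and x :: real
  assumes "posdef_mat P" and "posdef_mat Q"
  defines "U \<equiv> Pol (mpow P (x/2) ** mpow Q (1/2))"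
      and "V \<equiv> Pol (mpow P (1/2) ** mpow Q (x/2))"
  shows "genF (mpow P x) P Q = trace (mpow P (1/2) ** U ** mpow Q (1/2))
       \<and> trace (mpow P (1/2) ** U ** mpow Q (1/2))
           = trace (mpow P ((1 - x)/2) ** msqrt (mpow P (x/2) ** Q ** mpow P (x/2)))
       \<and> genF (mpow Q x) P Q = trace (mpow P (1/2) ** V ** mpow Q (1/2))
       \<and> trace (mpow P (1/2) ** V ** mpow Q (1/2))
           = trace (msqrt (mpow Q (x/2) ** P ** mpow Q (x/2)) ** mpow Q ((1 - x)/2))"
  using genF_mpow1[OF assms(1), of x Q] genF_mpow2[OF assms(2), of x P]
    part2[OF assms(1,2), of x] part4[OF assms(1,2), of x]
  unfolding U_def V_def by simp

end
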